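(* Let $i,j$ be positive integers. Write the $\mathcal{L}$-class and the $\hat{\mathcal{A}}$-class as polynomials in the Pontryagin classes, $\mathcal{L}=1+\dots+s_ip_i+\dots+s_jp_j+\dots+s_{i+j}p_{i+j}+\dots+s_{i,j}p_ip_j+\dots$ and $\hat{\mathcal{A}}=1+\dots+a_ip_i+\dots+a_jp_j+\dots+a_{i+j}p_{i+j}+\dots+a_{i,j}p_ip_j+\dots$. Then $s_is_j=s_{i+j}+\lambda s_{i,j}$ and $a_ia_j=a_{i+j}+\lambda a_{i,j}$, where $\lambda=2$ if $i=j$ and $\lambda=1$ if $i\neq j$. Consequently the $2\times 2$ matrix with rows $(s_{i,j},s_{i+j})$ and $(a_{i,j},a_{i+j})$ is non-singular.
   Context: Here $s_k$, $a_k$ denote the coefficients of $p_k$ and $s_{i,j}$, $a_{i,j}$ the coefficients of the monomial $p_ip_j$ in the Hirzebruch $\mathcal{L}$-polynomial and the $\hat{\mathcal{A}}$-polynomial respectively. *)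

theory Defs
  imports "HOL-Computational_Algebra.Formal_Power_Series" "HOL-Library.Multiset"
begin

text \<open>Elementary symmetric polynomial e_i in the N variables x 0, ..., x (N-1).
  The Pontryagin class p_i is e_i evaluated at the squares of the formal Chern roots.\<close>
definition esym :: "nat \<Rightarrow> nat \<Rightarrow> (nat \<Rightarrow> real) \<Rightarrow> real" where
  "esym N i x = (\<Sum>S\<in>{S. S \<subseteq> {..<N} \<and> card S = i}. \<Prod>m\<in>S. x m)"

text \<open>Partitions of n, as multisets of positive integers; a partition mu encodes the
  monomial p_mu = prod of p_k over k in mu.\<close>
definition partitions :: "nat \<Rightarrow> nat multiset set" where
  "partitions n = {\<mu>. (\<forall>k\<in>#\<mu>. 0 < k) \<and> sum_mset \<mu> = n}"

definition expvecs :: "nat \<Rightarrow> (nat \<Rightarrow> nat) set" where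
  "expvecs n = {\<alpha>. (\<forall>m. n \<le> m \<longrightarrow> \<alpha> m = 0) \<and> (\<Sum>m<n. \<alpha> m) = n}"

text \<open>Multiplicative sequence (Hirzebruch) with characteristic power series Q:
  K_n(p_1,...,p_n) is the degree n part of prod_m Q(x_m), written as a polynomial in the
  elementary symmetric functions p_k = e_k(x). Using n variables suffices (and makes the
  e_1..e_n algebraically independent); the coefficient vector is the unique one realizing
  this identity of polynomial functions.\<close>
definition mseq_coeffs :: "real fps \<Rightarrow> nat \<Rightarrow> nat multiset \<Rightarrow> real" where
  "mseq_coeffs Q n = (THE c. (\<forall>\<mu>. \<mu> \<notin> partitions n \<longrightarrow> c \<mu> = 0) \<and>
     (\<forall>x :: nat \<Rightarrow> real.
        (\<Sum>\<alpha>\<in>expvecs n. \<Prod>m<n. fps_nth Q (\<alpha> m) * x m ^ \<alpha> m)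
      = (\<Sum>\<mu>\<in>partitions n. c \<mu> * prod_mset (image_mset (\<lambda>k. esym n k x) \<mu>))))"

definition mseq_coeff :: "real fps \<Rightarrow> nat multiset \<Rightarrow> real" where
  "mseq_coeff Q \<mu> = mseq_coeffs Q (sum_mset \<mu>) \<mu>"

text \<open>Characteristic series of L: sqrt z / tanh (sqrt z) = cosh(sqrt z) / (sinh(sqrt z)/sqrt z).\<close>
definition L_series :: "real fps" where
  "L_series = Abs_fps (\<lambda>k. 1 / fact (2*k)) * inverse (Abs_fps (\<lambda>k. 1 / fact (2*k+1)))"

text \<open>Characteristic series of A-hat: (sqrt z / 2) / sinh (sqrt z / 2).\<close>
definition A_series :: "real fps" where
  "A_series = inverse (Abs_fps (\<lambda>k. 1 / (4 ^ k * fact (2*k+1))))"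

definition s_coeff :: "nat multiset \<Rightarrow> real" where "s_coeff \<mu> = mseq_coeff L_series \<mu>"
definition a_coeff :: "nat multiset \<Rightarrow> real" where "a_coeff \<mu> = mseq_coeff A_series \<mu>"

end

theory Submission
  imports Defs "HOL-Computational_Algebra.Polynomial"
begin

unbundle fps_syntax


lemma mem_le_sum_mset: "(k::nat) \<in># \<mu> \<Longrightarrow> k \<le> sum_mset \<mu>"
  by (metis le_add1 multi_member_split sum_mset.add_mset)

lemma size_le_sum_mset: "(\<forall>k\<in>#\<mu>. 0 < (k::nat)) \<Longrightarrow> size \<mu> \<le> sum_mset \<mu>"
  by (induction \<mu>) auto

lemma finite_partitions: "finite (partitions n)"
proof (rule finite_subset)
  show "partitions n \<subseteq> (\<Union>s\<in>{..n}. multisets_of_size {1..n} s)"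
  proof
    fix \<mu> assume m: "\<mu> \<in> partitions n"
    hence "size \<mu> \<le> n" using size_le_sum_mset by (auto simp: partitions_def)
    moreover have "set_mset \<mu> \<subseteq> {1..n}" using m mem_le_sum_mset
      by (fastforce simp: partitions_def)
    ultimately show "\<mu> \<in> (\<Union>s\<in>{..n}. multisets_of_size {1..n} s)"
      by (auto simp: multisets_of_size_def)
  qed
qed auto

lemma finite_submsets: "finite {\<alpha>. \<alpha> \<subseteq># (\<mu>::'a multiset)}"
proof (rule finite_subset)
  show "{\<alpha>. \<alpha> \<subseteq># \<mu>} \<subseteq> (\<Union>s\<in>{..size \<mu>}. multisets_of_size (set_mset \<mu>) s)"
    by (auto simp: multisets_of_size_def size_mset_mono dest: mset_subset_eqD)
qed auto

definition pe :: "nat \<Rightarrow> nat multiset \<Rightarrow> (nat \<Rightarrow> real) \<Rightarrow> real" where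
  "pe N \<mu> x = prod_mset (image_mset (\<lambda>k. esym N k x) \<mu>)"
definition hom :: "nat \<Rightarrow> (nat multiset \<Rightarrow> real) \<Rightarrow> bool" where
  "hom n c \<longleftrightarrow> (\<forall>\<mu>. \<mu> \<notin> partitions n \<longrightarrow> c \<mu> = 0)"
definition evp :: "nat \<Rightarrow> nat \<Rightarrow> (nat multiset \<Rightarrow> real) \<Rightarrow> (nat \<Rightarrow> real) \<Rightarrow> real" where
  "evp N n c x = (\<Sum>\<mu>\<in>partitions n. c \<mu> * pe N \<mu> x)"
definition mul :: "(nat multiset \<Rightarrow> real) \<Rightarrow> (nat multiset \<Rightarrow> real) \<Rightarrow> nat multiset \<Rightarrow> real" where
  "mul c d \<mu> = (\<Sum>\<alpha>\<in>{\<alpha>. \<alpha> \<subseteq># \<mu>}. c \<alpha> * d (\<mu> - \<alpha>))"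

lemma pe_add: "pe N (\<alpha> + \<beta>) x = pe N \<alpha> x * pe N \<beta> x"
  by (simp add: pe_def)

lemma partitions_add: "\<alpha> \<in> partitions a \<Longrightarrow> \<beta> \<in> partitions b \<Longrightarrow> \<alpha> + \<beta> \<in> partitions (a+b)"
  by (auto simp: partitions_def)

lemma partitions_diff: "\<mu> \<in> partitions (a+b) \<Longrightarrow> \<alpha> \<in> partitions a \<Longrightarrow> \<alpha> \<subseteq># \<mu> \<Longrightarrow> \<mu> - \<alpha> \<in> partitions b"
  unfolding partitions_def
  by (auto dest: in_diffD) (metis add_diff_cancel_left' subset_mset.add_diff_inverse sum_mset.union)

lemma hom_mul: assumes "hom a c" "hom b d" shows "hom (a+b) (mul c d)"
  unfolding hom_def
proof (intro allI impI)
  fix \<mu> assume m: "\<mu> \<notin> partitions (a+b)"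
  have "c \<alpha> * d (\<mu> - \<alpha>) = 0" if "\<alpha> \<subseteq># \<mu>" for \<alpha>
  proof (cases "\<alpha> \<in> partitions a \<and> \<mu> - \<alpha> \<in> partitions b")
    case True
    then have "\<alpha> + (\<mu> - \<alpha>) \<in> partitions (a+b)" by (intro partitions_add) auto
    with that m show ?thesis by (simp add: subset_mset.add_diff_inverse)
  next
    case False then show ?thesis using assms by (auto simp: hom_def)
  qed
  then show "mul c d \<mu> = 0" unfolding mul_def by (intro sum.neutral) auto
qed

lemma evp_mul: assumes "hom a c" "hom b d"
  shows "evp N (a+b) (mul c d) x = evp N a c x * evp N b d x"
proof -
  have "evp N (a+b) (mul c d) x = (\<Sum>\<mu>\<in>partitions (a+b). \<Sum>\<alpha>\<in>{\<alpha>. \<alpha> \<subseteq># \<mu>}. c \<alpha> * d (\<mu> - \<alpha>) * pe N \<mu> x)"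
    by (simp add: evp_def mul_def sum_distrib_right)
  also have "\<dots> = (\<Sum>\<mu>\<in>partitions (a+b). \<Sum>\<alpha>\<in>{\<alpha>. \<alpha> \<subseteq># \<mu> \<and> \<alpha> \<in> partitions a}. c \<alpha> * d (\<mu> - \<alpha>) * pe N \<mu> x)"
    by (intro sum.cong refl sum.mono_neutral_right) (auto simp: finite_submsets assms(1)[unfolded hom_def])
  also have "\<dots> = (\<Sum>(\<mu>,\<alpha>)\<in>(SIGMA \<mu>:partitions (a+b). {\<alpha>. \<alpha> \<subseteq># \<mu> \<and> \<alpha> \<in> partitions a}). c \<alpha> * d (\<mu> - \<alpha>) * pe N \<mu> x)"
    by (rule sum.Sigma) (auto simp: finite_partitions intro: finite_subset[OF _ finite_submsets])
  also have "\<dots> = (\<Sum>(\<alpha>,\<beta>)\<in>partitions a \<times> partitions b. c \<alpha> * d \<beta> * pe N (\<alpha>+\<beta>) x)"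
  proof (rule sum.reindex_bij_witness[where i="\<lambda>(\<alpha>,\<beta>). (\<alpha>+\<beta>,\<alpha>)" and j="\<lambda>(\<mu>,\<alpha>). (\<alpha>, \<mu>-\<alpha>)"])
  qed (auto simp: partitions_add partitions_diff subset_mset.add_diff_inverse)
  also have "\<dots> = evp N a c x * evp N b d x"
    by (simp add: evp_def sum_product sum.cartesian_product pe_add mult_ac)
  finally show ?thesis .
qed



definition cp :: "((nat \<Rightarrow> real) \<Rightarrow> real) \<Rightarrow> bool" where
  "cp f \<longleftrightarrow> (\<forall>x m. \<exists>p. \<forall>t. f (x(m:=t)) = poly p t)"

lemma cp_const: "cp (\<lambda>x. c)"
  unfolding cp_def by (intro allI exI[of _ "[:c:]"]) simp

lemma cp_var: "cp (\<lambda>x. x k)"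
  unfolding cp_def
proof (intro allI)
  fix x :: "nat \<Rightarrow> real" and m
  show "\<exists>p. \<forall>t. (x(m:=t)) k = poly p t"
    by (cases "k = m") (auto intro: exI[of _ "[:0,1:]"] exI[of _ "[:x k:]"])
qed

lemma cp_add: "cp f \<Longrightarrow> cp g \<Longrightarrow> cp (\<lambda>x. f x + g x)"
  unfolding cp_def by (metis poly_add)

lemma cp_mult: "cp f \<Longrightarrow> cp g \<Longrightarrow> cp (\<lambda>x. f x * g x)"
  unfolding cp_def by (metis poly_mult)

lemma cp_sum: "(\<And>i. i \<in> I \<Longrightarrow> cp (f i)) \<Longrightarrow> cp (\<lambda>x. \<Sum>i\<in>I. f i x)"
proof (induction I rule: infinite_finite_induct)
  case (infinite A) then show ?case by (simp add: cp_const)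
next
  case empty then show ?case by (simp add: cp_const)
next
  case (insert a A) then show ?case by (simp add: cp_add)
qed

lemma cp_prod: "(\<And>i. i \<in> I \<Longrightarrow> cp (f i)) \<Longrightarrow> cp (\<lambda>x. \<Prod>i\<in>I. f i x)"
proof (induction I rule: infinite_finite_induct)
  case (infinite A) then show ?case by (simp add: cp_const)
next
  case empty then show ?case by (simp add: cp_const)
next
  case (insert a A) then show ?case by (simp add: cp_mult)
qed

lemma cp_esym: "cp (esym N k)"
  unfolding esym_def by (intro cp_sum cp_prod cp_var)

lemma cp_pe: "cp (pe N \<mu>)"
  unfolding pe_def
proof (induction \<mu>)
  case empty then show ?case by (simp add: cp_const)
next
  case (add x \<mu>) then show ?case by (simp add: cp_mult cp_esym)
qed

lemma cp_evp: "cp (evp N D c)"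
  unfolding evp_def by (intro cp_sum cp_mult cp_const cp_pe)

lemma cp_density:
  assumes "cp f" "finite A" "\<And>x. (\<forall>m\<in>A. x m \<noteq> 0) \<Longrightarrow> f x = 0"
  shows "f x = 0"
  using assms(2,3)
proof (induction A arbitrary: x rule: finite_induct)
  case empty then show ?case by simp
next
  case (insert a A)
  have "f y = 0" if y: "\<forall>m\<in>A. y m \<noteq> 0" for y
  proof -
    obtain p where p: "\<And>t. f (y(a:=t)) = poly p t" using assms(1) unfolding cp_def by blast
    have "poly p t = 0" if "t \<noteq> 0" for t
    proof -
      have "\<forall>m\<in>insert a A. (y(a:=t)) m \<noteq> 0" using y that insert.hyps by auto
      then have "f (y(a:=t)) = 0" using insert.prems by blast
      then show ?thesis by (simp add: p)
    qed
    then have "{t. poly p t = 0} \<supseteq> - {0}" by auto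
    moreover have "infinite (- {0::real})" by (simp add: infinite_UNIV_char_0)
    ultimately have "infinite {t. poly p t = 0}" using finite_subset by blast
    then have "p = 0" using poly_roots_finite by blast
    then show ?thesis using p[of "y a"] by simp
  qed
  then show ?case using insert.IH by blast
qed

lemma esym_cong: "(\<And>m. m < N \<Longrightarrow> x m = y m) \<Longrightarrow> esym N k x = esym N k y"
  unfolding esym_def by (intro sum.cong prod.cong refl) auto

lemma pe_cong: "(\<And>m. m < N \<Longrightarrow> x m = y m) \<Longrightarrow> pe N \<mu> x = pe N \<mu> y"
  unfolding pe_def using esym_cong by (metis (no_types, lifting) image_mset_cong)

lemma esym_big: "N < k \<Longrightarrow> esym N k x = 0"
proof -
  assume "N < k"
  have "card S \<le> N" if "S \<subseteq> {..<N}" for S using card_mono[OF finite_lessThan that] by simp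
  have E: "{S. S \<subseteq> {..<N} \<and> card S = k} = {}"
  proof (rule equals0I)
    fix S assume "S \<in> {S. S \<subseteq> {..<N} \<and> card S = k}"
    then have "card S \<le> N" "card S = k" using \<open>\<And>S. S \<subseteq> {..<N} \<Longrightarrow> card S \<le> N\<close> by auto
    with \<open>N < k\<close> show False by simp
  qed
  show ?thesis unfolding esym_def E by simp
qed

lemma esym_top: "esym N N x = (\<Prod>m<N. x m)"
proof -
  have "S = {..<N}" if "S \<subseteq> {..<N}" "card S = N" for S
    using card_subset_eq[OF finite_lessThan that(1)] that(2) by simp
  then have "{S. S \<subseteq> {..<N} \<and> card S = N} = {{..<N}}" by auto
  then show ?thesis by (simp add: esym_def)
qed

lemma esym_Suc_zero: assumes "x N = 0" shows "esym (Suc N) k x = esym N k x"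
proof -
  have "esym (Suc N) k x = (\<Sum>S\<in>{S. S \<subseteq> {..<N} \<and> card S = k}. \<Prod>m\<in>S. x m)"
    unfolding esym_def
  proof (rule sum.mono_neutral_right)
    show "\<forall>S\<in>{S. S \<subseteq> {..<Suc N} \<and> card S = k} - {S. S \<subseteq> {..<N} \<and> card S = k}. (\<Prod>m\<in>S. x m) = 0"
    proof
      fix S assume "S \<in> {S. S \<subseteq> {..<Suc N} \<and> card S = k} - {S. S \<subseteq> {..<N} \<and> card S = k}"
      then have "N \<in> S" "finite S" by (auto simp: less_Suc_eq finite_subset)
      moreover have "\<exists>a\<in>S. x a = 0" using \<open>N \<in> S\<close> assms by blast
      ultimately show "(\<Prod>m\<in>S. x m) = 0" by (simp add: prod_zero_iff)
    qed
  qed (auto intro: finite_subset)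
  then show ?thesis by (simp add: esym_def)
qed

lemma pe_Suc_zero: "x N = 0 \<Longrightarrow> pe (Suc N) \<mu> x = pe N \<mu> x"
  unfolding pe_def by (simp add: esym_Suc_zero)

lemma pe_big: "k \<in># \<mu> \<Longrightarrow> N < k \<Longrightarrow> pe N \<mu> x = 0"
  unfolding pe_def by (metis esym_big image_eqI multiset.set_map prod_mset_zero_iff)

lemma pe_add_mset: "pe N (add_mset k \<mu>) x = esym N k x * pe N \<mu> x"
  by (simp add: pe_def)

lemma partitions_0: "partitions 0 = {{#}}"
proof -
  have "\<mu> = {#}" if "\<forall>k\<in>#\<mu>. 0 < k" "sum_mset \<mu> = (0::nat)" for \<mu>
    using that by (metis mem_le_sum_mset le_zero_eq not_less0 multiset_nonemptyE)
  then show ?thesis by (auto simp: partitions_def)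
qed

lemma uniq_aux:
  "\<forall>c. (\<forall>\<mu>. c \<mu> \<noteq> 0 \<longrightarrow> \<mu> \<in> partitions D \<and> (\<forall>k\<in>#\<mu>. k \<le> N)) \<longrightarrow> (\<forall>x. evp N D c x = 0) \<longrightarrow> (\<forall>\<mu>. c \<mu> = 0)"
proof (induction N arbitrary: D)
  case 0
  show ?case
  proof (intro allI impI)
    fix c :: "nat multiset \<Rightarrow> real" and \<mu>
    assume supp: "\<forall>\<mu>. c \<mu> \<noteq> 0 \<longrightarrow> \<mu> \<in> partitions D \<and> (\<forall>k\<in>#\<mu>. k \<le> 0)"
      and z: "\<forall>x. evp 0 D c x = 0"
    have s: "c \<mu> \<noteq> 0 \<Longrightarrow> \<mu> = {#} \<and> D = 0" for \<mu>
    proof -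
      assume "c \<mu> \<noteq> 0"
      then have "\<mu> \<in> partitions D" "\<forall>k\<in>#\<mu>. k \<le> 0" using supp by auto
      then have "\<mu> = {#}" by (auto simp: partitions_def) (metis le_zero_eq multiset_nonemptyE not_less0)
      then show ?thesis using \<open>\<mu> \<in> partitions D\<close> by (simp add: partitions_def)
    qed
    show "c \<mu> = 0"
    proof (rule ccontr)
      assume "c \<mu> \<noteq> 0"
      with s have m: "\<mu> = {#}" "D = 0" by auto
      have "evp 0 D c x = c {#}" for x by (simp add: evp_def m partitions_0 pe_def)
      with z m \<open>c \<mu> \<noteq> 0\<close> show False by auto
    qed
  qed
next
  case (Suc N)
  show ?case
  proof (induction D rule: less_induct)
    case (less D)
    show ?case
    proof (rule allI, intro impI)
      fix c :: "nat multiset \<Rightarrow> real"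
      assume supp: "\<forall>\<mu>. c \<mu> \<noteq> 0 \<longrightarrow> \<mu> \<in> partitions D \<and> (\<forall>k\<in>#\<mu>. k \<le> Suc N)"
        and z: "\<forall>x. evp (Suc N) D c x = 0"
      define c' where "c' \<mu> = (if Suc N \<in># \<mu> then 0 else c \<mu>)" for \<mu>
      have supp': "\<forall>\<mu>. c' \<mu> \<noteq> 0 \<longrightarrow> \<mu> \<in> partitions D \<and> (\<forall>k\<in>#\<mu>. k \<le> N)"
        proof (intro allI impI)
          fix \<mu> assume a: "c' \<mu> \<noteq> 0"
          then have b: "Suc N \<notin># \<mu>" "c \<mu> \<noteq> 0" by (auto simp: c'_def split: if_splits)
          show "\<mu> \<in> partitions D \<and> (\<forall>k\<in>#\<mu>. k \<le> N)"
          proof (intro conjI ballI)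
            show "\<mu> \<in> partitions D" using supp b by blast
            fix k assume "k \<in># \<mu>"
            then have "k \<le> Suc N" "k \<noteq> Suc N" using supp b by auto
            then show "k \<le> N" by simp
          qed
        qed
      have z': "evp N D c' x = 0" for x
      proof -
        define y where "y = x(N:=0)"
        have "evp (Suc N) D c y = evp N D c' x"
          unfolding evp_def
        proof (intro sum.cong refl)
          fix \<mu> assume "\<mu> \<in> partitions D"
          have "pe (Suc N) \<mu> y = pe N \<mu> x"
            using pe_Suc_zero[of y N \<mu>] pe_cong[of N y x \<mu>] by (simp add: y_def)
          moreover have "Suc N \<in># \<mu> \<Longrightarrow> pe N \<mu> x = 0" using pe_big by blast
          ultimately show "c \<mu> * pe (Suc N) \<mu> y = c' \<mu> * pe N \<mu> x"
            by (simp add: c'_def)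
        qed
        with z show ?thesis by simp
      qed
      have c'0: "\<forall>\<mu>. c' \<mu> = 0" using Suc.IH[of D] supp' z' by blast
      have cin: "c \<mu> \<noteq> 0 \<Longrightarrow> Suc N \<in># \<mu>" for \<mu> using c'0 unfolding c'_def by (auto split: if_splits)
      show "\<forall>\<mu>. c \<mu> = 0"
      proof (cases "D < Suc N")
        case True
        have "c \<mu> = 0" for \<mu>
          using cin supp True mem_le_sum_mset[of "Suc N" \<mu>] by (force simp: partitions_def)
        then show ?thesis by blast
      next
        case False
        define D' where "D' = D - Suc N"
        have DD: "D = D' + Suc N" "D' < D" using False by (auto simp: D'_def)
        define c'' where "c'' \<nu> = c (add_mset (Suc N) \<nu>)" for \<nu>
        have supp'': "\<forall>\<nu>. c'' \<nu> \<noteq> 0 \<longrightarrow> \<nu> \<in> partitions D' \<and> (\<forall>k\<in>#\<nu>. k \<le> Suc N)"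
          using supp unfolding c''_def by (auto simp: partitions_def DD)
        have split: "evp (Suc N) D c x = esym (Suc N) (Suc N) x * evp (Suc N) D' c'' x" for x
        proof -
          have "evp (Suc N) D c x = (\<Sum>\<mu>\<in>partitions D \<inter> {\<mu>. Suc N \<in># \<mu>}. c \<mu> * pe (Suc N) \<mu> x)"
            unfolding evp_def using cin
            by (intro sum.mono_neutral_right) (auto simp: finite_partitions)
          also have "partitions D \<inter> {\<mu>. Suc N \<in># \<mu>} = add_mset (Suc N) ` partitions D'"
          proof (intro equalityI subsetI)
            fix \<mu> assume "\<mu> \<in> partitions D \<inter> {\<mu>. Suc N \<in># \<mu>}"
            then have m1: "\<mu> = add_mset (Suc N) (\<mu> - {#Suc N#})" "\<mu> \<in> partitions D"
              by (auto simp: insert_DiffM)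
            have "\<mu> - {#Suc N#} \<in> partitions D'"
              unfolding partitions_def
            proof (intro CollectI conjI ballI)
              show "0 < k" if "k \<in># \<mu> - {#Suc N#}" for k
                using that m1(2) by (auto simp: partitions_def dest: in_diffD)
              have "sum_mset \<mu> = Suc N + sum_mset (\<mu> - {#Suc N#})"
                by (subst m1(1)) simp
              then show "sum_mset (\<mu> - {#Suc N#}) = D'" using m1(2) by (simp add: partitions_def DD)
            qed
            then show "\<mu> \<in> add_mset (Suc N) ` partitions D'" using m1(1) by (metis image_eqI)
          qed (auto simp: partitions_def DD)
          also have "(\<Sum>\<mu>\<in>add_mset (Suc N) ` partitions D'. c \<mu> * pe (Suc N) \<mu> x)
              = (\<Sum>\<nu>\<in>partitions D'. c'' \<nu> * pe (Suc N) (add_mset (Suc N) \<nu>) x)"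
            by (subst sum.reindex) (auto simp: inj_on_def c''_def)
          also have "\<dots> = esym (Suc N) (Suc N) x * evp (Suc N) D' c'' x"
            by (simp add: evp_def pe_add_mset sum_distrib_left mult_ac)
          finally show ?thesis .
        qed
        have g0: "evp (Suc N) D' c'' x = 0" for x
        proof (rule cp_density[OF cp_evp, of "{..<Suc N}"])
          fix y :: "nat \<Rightarrow> real" assume "\<forall>m\<in>{..<Suc N}. y m \<noteq> 0"
          then have "esym (Suc N) (Suc N) y \<noteq> 0" by (simp add: esym_top)
          with split[of y] z show "evp (Suc N) D' c'' y = 0" by simp
        qed simp
        have "\<forall>\<nu>. c'' \<nu> = 0" using less[OF DD(2)] supp'' g0 by blast
        then have "c \<mu> = 0" for \<mu>
          proof (cases "Suc N \<in># \<mu>")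
          case True
          then have "c \<mu> = c'' (\<mu> - {#Suc N#})" unfolding c''_def by (simp add: insert_DiffM)
          then show ?thesis using \<open>\<forall>\<nu>. c'' \<nu> = 0\<close> by simp
        qed (use cin in blast)
        then show ?thesis by blast
      qed
    qed
  qed
qed

lemma uniq:
  assumes "hom n c" "hom n d" "\<And>x. evp n n c x = evp n n d x"
  shows "c = d"
proof -
  define e where "e \<mu> = c \<mu> - d \<mu>" for \<mu>
  have "\<forall>\<mu>. e \<mu> \<noteq> 0 \<longrightarrow> \<mu> \<in> partitions n \<and> (\<forall>k\<in>#\<mu>. k \<le> n)"
  proof (intro allI impI)
    fix \<mu> assume "e \<mu> \<noteq> 0"
    then have m: "\<mu> \<in> partitions n" using assms(1,2) unfolding hom_def e_def by (metis diff_self)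
    then show "\<mu> \<in> partitions n \<and> (\<forall>k\<in>#\<mu>. k \<le> n)"
      using mem_le_sum_mset[of _ \<mu>] by (auto simp: partitions_def)
  qed
  moreover have "evp n n e x = 0" for x
    using assms(3)[of x] by (simp add: evp_def e_def left_diff_distrib sum_subtractf)
  ultimately have "\<forall>\<mu>. e \<mu> = 0" using uniq_aux by blast
  then show ?thesis by (auto simp: e_def)
qed



definition sc :: "real \<Rightarrow> real fps \<Rightarrow> real fps" where
  "sc c f = Abs_fps (\<lambda>k. c^k * f $ k)"

lemma sc_nth[simp]: "sc c f $ k = c^k * f $ k"
  by (simp add: sc_def)

lemma sc_mult: "sc c (f*g) = sc c f * sc c g"
proof (rule fps_ext)
  fix n
  have "sc c (f*g) $ n = (\<Sum>i=0..n. c^n * (f $ i * g $ (n-i)))"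
    by (simp add: fps_mult_nth sum_distrib_left)
  also have "\<dots> = (\<Sum>i=0..n. (c^i * f $ i) * (c^(n-i) * g $ (n-i)))"
  proof (intro sum.cong refl)
    fix i assume "i \<in> {0..n}"
    then have "c^n = c^i * c^(n-i)" by (simp add: power_add[symmetric])
    then show "c^n * (f $ i * g $ (n-i)) = (c^i * f $ i) * (c^(n-i) * g $ (n-i))" by (simp add: mult_ac)
  qed
  also have "\<dots> = (sc c f * sc c g) $ n" by (simp add: fps_mult_nth)
  finally show "sc c (f*g) $ n = (sc c f * sc c g) $ n" .
qed

lemma sc_deriv: "fps_deriv (sc c f) = fps_const c * sc c (fps_deriv f)"
  by (rule fps_ext) (simp add: mult_ac)

lemma sc_one[simp]: "sc c 1 = 1"
  by (rule fps_ext) (simp add: fps_one_nth)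

lemma sc_add: "sc c (f + g) = sc c f + sc c g"
  by (rule fps_ext) (simp add: algebra_simps)

lemma sc_diff: "sc c (f - g) = sc c f - sc c g"
  by (rule fps_ext) (simp add: algebra_simps)

lemma sc_const[simp]: "sc c (fps_const a) = fps_const a"
  by (rule fps_ext) simp

lemma sc_1X: "sc c (1 + fps_X) = 1 + fps_const c * fps_X"
  by (rule fps_ext) (auto simp: fps_X_nth le_Suc_eq)

lemma sc_cmult: "sc c (fps_const a * f) = fps_const a * sc c f"
  by (rule fps_ext) (simp add: algebra_simps)

lemma sc_X: "sc c (fps_X * f) = fps_const c * fps_X * sc c f"
  by (rule fps_ext) (auto simp: algebra_simps power_eq_if)

lemma sc_inverse: assumes "f $ 0 \<noteq> 0" shows "sc c (inverse f) = inverse (sc c f)"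
proof -
  have "sc c f * sc c (inverse f) = 1"
    by (simp add: sc_mult[symmetric] inverse_mult_eq_1'[OF assms])
  then show ?thesis by (simp add: fps_inverse_unique)
qed

definition KF :: "real fps \<Rightarrow> nat \<Rightarrow> (nat \<Rightarrow> real) \<Rightarrow> real fps" where
  "KF Q N x = (\<Prod>m<N. sc (x m) Q)"

definition Pfun :: "nat \<Rightarrow> nat \<Rightarrow> (nat \<Rightarrow> real) \<Rightarrow> real" where
  "Pfun N k x = (\<Sum>m<N. x m ^ k)"

lemma deriv_prod:
  fixes N :: nat
  assumes "\<And>m. fps_deriv (f m) = f m * g m"
  shows "fps_deriv (\<Prod>m<N. f m) = (\<Prod>m<N. f m) * (\<Sum>m<N. g m)"
proof (induction N)
  case 0 then show ?case by simp
next
  case (Suc N) then show ?case by (simp add: assms algebra_simps)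
qed

lemma KF_rec:
  assumes "fps_deriv Q = Q * R"
  shows "real (Suc n) * KF Q N x $ Suc n = (\<Sum>i=0..n. KF Q N x $ i * (R $ (n - i) * Pfun N (Suc (n-i)) x))"
proof -
  define G where "G = (\<Sum>m<N. fps_const (x m) * sc (x m) R)"
  have d: "fps_deriv (sc (x m) Q) = sc (x m) Q * (fps_const (x m) * sc (x m) R)" for m
    by (simp add: sc_deriv assms sc_mult mult_ac)
  have "fps_deriv (KF Q N x) = KF Q N x * G"
    unfolding KF_def G_def by (rule deriv_prod[OF d])
  then have "fps_deriv (KF Q N x) $ n = (KF Q N x * G) $ n" by simp
  moreover have "G $ k = R $ k * Pfun N (Suc k) x" for k
    by (simp add: G_def fps_sum_nth Pfun_def sum_distrib_left mult_ac)
  ultimately show ?thesis by (simp add: fps_mult_nth)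
qed

lemma KF_nth0: assumes "Q $ 0 = 1" shows "KF Q N x $ 0 = 1"
  unfolding KF_def
proof (induction N)
  case 0 then show ?case by simp
next
  case (Suc N) then show ?case by (simp add: assms)
qed

definition ev' :: "nat \<Rightarrow> nat \<Rightarrow> (nat \<Rightarrow> nat) set" where
  "ev' N d = {\<alpha>. (\<forall>m. N \<le> m \<longrightarrow> \<alpha> m = 0) \<and> (\<Sum>m<N. \<alpha> m) = d}"

lemma ev'_0: "ev' 0 d = (if d = 0 then {\<lambda>_. 0} else {})"
  by (auto simp: ev'_def)

lemma ev'_Suc: "ev' (Suc N) d = (\<Union>a\<in>{..d}. (\<lambda>\<alpha>. \<alpha>(N:=a)) ` ev' N (d-a))"
proof (intro equalityI subsetI)
  fix \<alpha> assume a: "\<alpha> \<in> ev' (Suc N) d"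
  define \<beta> where "\<beta> = \<alpha>(N:=0)"
  have s: "(\<Sum>m<Suc N. \<alpha> m) = d" "\<forall>m. Suc N \<le> m \<longrightarrow> \<alpha> m = 0" using a by (auto simp: ev'_def)
  have "(\<Sum>m<N. \<beta> m) = (\<Sum>m<N. \<alpha> m)" unfolding \<beta>_def by (intro sum.cong) auto
  then have "\<beta> \<in> ev' N (d - \<alpha> N)" "\<alpha> N \<le> d" using s by (auto simp: ev'_def \<beta>_def)
  moreover have "\<alpha> = \<beta>(N := \<alpha> N)" by (auto simp: \<beta>_def)
  ultimately show "\<alpha> \<in> (\<Union>a\<in>{..d}. (\<lambda>\<alpha>. \<alpha>(N:=a)) ` ev' N (d-a))" by blast
next
  fix \<alpha> assume "\<alpha> \<in> (\<Union>a\<in>{..d}. (\<lambda>\<alpha>. \<alpha>(N:=a)) ` ev' N (d-a))"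
  then obtain a \<beta> where ab: "a \<le> d" "\<beta> \<in> ev' N (d-a)" "\<alpha> = \<beta>(N:=a)" by auto
  have "(\<Sum>m<N. \<alpha> m) = (\<Sum>m<N. \<beta> m)" unfolding ab(3) by (intro sum.cong) auto
  then show "\<alpha> \<in> ev' (Suc N) d" using ab by (auto simp: ev'_def)
qed

lemma finite_ev': "finite (ev' N d)"
proof (induction N arbitrary: d)
  case 0 then show ?case by (simp add: ev'_0)
next
  case (Suc N) then show ?case by (simp add: ev'_Suc)
qed

lemma KF_nth: "KF Q N x $ d = (\<Sum>\<alpha>\<in>ev' N d. \<Prod>m<N. Q $ (\<alpha> m) * x m ^ \<alpha> m)"
proof (induction N arbitrary: d)
  case 0 then show ?case by (simp add: KF_def ev'_0)
next
  case (Suc N)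
  have "(\<Sum>\<alpha>\<in>ev' (Suc N) d. \<Prod>m<Suc N. Q $ (\<alpha> m) * x m ^ \<alpha> m)
      = (\<Sum>a\<in>{..d}. \<Sum>\<alpha>\<in>(\<lambda>\<alpha>. \<alpha>(N:=a)) ` ev' N (d-a). \<Prod>m<Suc N. Q $ (\<alpha> m) * x m ^ \<alpha> m)"
    unfolding ev'_Suc by (rule sum.UNION_disjoint) (auto simp: finite_ev', metis fun_upd_same)
  also have "\<dots> = (\<Sum>a\<in>{..d}. \<Sum>\<beta>\<in>ev' N (d-a). (\<Prod>m<N. Q $ (\<beta> m) * x m ^ \<beta> m) * (Q $ a * x N ^ a))"
  proof (rule sum.cong[OF refl])
    fix a assume "a \<in> {..d}"
    have inj: "inj_on (\<lambda>\<alpha>. \<alpha>(N:=a)) (ev' N (d-a))"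
    proof (rule inj_onI)
      fix \<beta> \<gamma> assume "\<beta> \<in> ev' N (d-a)" "\<gamma> \<in> ev' N (d-a)" "\<beta>(N:=a) = \<gamma>(N:=a)"
      then show "\<beta> = \<gamma>" by (auto simp: ev'_def fun_eq_iff) (metis order_refl)
    qed
    show "(\<Sum>\<alpha>\<in>(\<lambda>\<alpha>. \<alpha>(N:=a)) ` ev' N (d-a). \<Prod>m<Suc N. Q $ (\<alpha> m) * x m ^ \<alpha> m)
        = (\<Sum>\<beta>\<in>ev' N (d-a). (\<Prod>m<N. Q $ (\<beta> m) * x m ^ \<beta> m) * (Q $ a * x N ^ a))"
    proof -
      have "(\<Sum>\<alpha>\<in>(\<lambda>\<alpha>. \<alpha>(N:=a)) ` ev' N (d-a). \<Prod>m<Suc N. Q $ (\<alpha> m) * x m ^ \<alpha> m)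
        = (\<Sum>\<beta>\<in>ev' N (d-a). \<Prod>m<Suc N. Q $ ((\<beta>(N:=a)) m) * x m ^ (\<beta>(N:=a)) m)"
        by (rule sum.reindex[OF inj, unfolded comp_def])
      also have "\<dots> = (\<Sum>\<beta>\<in>ev' N (d-a). (\<Prod>m<N. Q $ (\<beta> m) * x m ^ \<beta> m) * (Q $ a * x N ^ a))"
      proof (rule sum.cong[OF refl])
        fix \<beta> assume "\<beta> \<in> ev' N (d-a)"
        have "(\<Prod>m<N. Q $ ((\<beta>(N:=a)) m) * x m ^ (\<beta>(N:=a)) m) = (\<Prod>m<N. Q $ (\<beta> m) * x m ^ \<beta> m)"
          by (intro prod.cong) auto
        then show "(\<Prod>m<Suc N. Q $ ((\<beta>(N:=a)) m) * x m ^ (\<beta>(N:=a)) m) = (\<Prod>m<N. Q $ (\<beta> m) * x m ^ \<beta> m) * (Q $ a * x N ^ a)"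
          by simp
      qed
      finally show ?thesis .
    qed
  qed
  also have "\<dots> = (\<Sum>a\<in>{..d}. KF Q N x $ (d-a) * (Q $ a * x N ^ a))"
    by (simp add: Suc.IH sum_distrib_right)
  also have "\<dots> = KF Q (Suc N) x $ d"
  proof -
    have "KF Q (Suc N) x = sc (x N) Q * KF Q N x" by (simp add: KF_def mult.commute)
    then have "KF Q (Suc N) x $ d = (\<Sum>a=0..d. (x N ^ a * Q $ a) * KF Q N x $ (d-a))"
      by (simp add: fps_mult_nth)
    then show ?thesis by (simp add: atLeast0AtMost mult_ac)
  qed
  finally show ?case by simp
qed

lemma esym_0: "esym 0 k x = (if k = 0 then 1 else 0)"
proof -
  have "{S. S \<subseteq> {..<0::nat} \<and> card S = k} = (if k = 0 then {{}} else {})" by auto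
  then show ?thesis by (simp add: esym_def)
qed

lemma esym_Suc: "esym (Suc N) k x = esym N k x + (if k = 0 then 0 else x N * esym N (k-1) x)"
proof -
  define B where "B = {S. S \<subseteq> {..<N} \<and> card S = k}"
  define C where "C = {S. S \<subseteq> {..<Suc N} \<and> card S = k \<and> N \<in> S}"
  have A: "{S. S \<subseteq> {..<Suc N} \<and> card S = k} = B \<union> C"
    by (auto simp: B_def C_def lessThan_Suc)
  have fin: "finite B" "finite C" by (auto simp: B_def C_def intro: finite_subset)
  have dis: "B \<inter> C = {}" by (auto simp: B_def C_def)
  have "esym (Suc N) k x = (\<Sum>S\<in>B. \<Prod>m\<in>S. x m) + (\<Sum>S\<in>C. \<Prod>m\<in>S. x m)"
    unfolding esym_def A by (rule sum.union_disjoint[OF fin dis])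
  also have "(\<Sum>S\<in>B. \<Prod>m\<in>S. x m) = esym N k x" by (simp add: esym_def B_def)
  also have "(\<Sum>S\<in>C. \<Prod>m\<in>S. x m) = (if k = 0 then 0 else x N * esym N (k-1) x)"
  proof (cases "k = 0")
    case True
    have "C = {}"
    proof (rule equals0I)
      fix S assume S: "S \<in> C"
      then have "finite S" by (auto simp: C_def intro: finite_subset)
      with S True show False by (auto simp: C_def)
    qed
    then show ?thesis using True by simp
  next
    case False
    have CC: "C = insert N ` {S. S \<subseteq> {..<N} \<and> card S = k - 1}"
    proof (intro equalityI subsetI)
      fix S assume S: "S \<in> C"
      then have "finite S" by (auto simp: C_def intro: finite_subset)
      then have "S - {N} \<subseteq> {..<N}" "card (S - {N}) = k - 1" "S = insert N (S - {N})"
        using S by (auto simp: C_def less_Suc_eq)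
      then show "S \<in> insert N ` {S. S \<subseteq> {..<N} \<and> card S = k - 1}" by blast
    next
      fix S assume "S \<in> insert N ` {S. S \<subseteq> {..<N} \<and> card S = k - 1}"
      then obtain T where T: "T \<subseteq> {..<N}" "card T = k - 1" "S = insert N T" by auto
      then have "finite T" "N \<notin> T" by (auto intro: finite_subset)
      then show "S \<in> C" using T False by (auto simp: C_def)
    qed
    have inj: "inj_on (insert N) {S. S \<subseteq> {..<N} \<and> card S = k - 1}"
      by (rule inj_onI) (metis insert_ident lessThan_iff less_irrefl mem_Collect_eq subsetD)
    have "(\<Sum>S\<in>C. \<Prod>m\<in>S. x m) = (\<Sum>T\<in>{S. S \<subseteq> {..<N} \<and> card S = k - 1}. \<Prod>m\<in>insert N T. x m)"
      unfolding CC by (rule sum.reindex[OF inj, unfolded comp_def])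
    also have "\<dots> = (\<Sum>T\<in>{S. S \<subseteq> {..<N} \<and> card S = k - 1}. x N * (\<Prod>m\<in>T. x m))"
    proof (intro sum.cong refl)
      fix T assume "T \<in> {S. S \<subseteq> {..<N} \<and> card S = k - 1}"
      then have "finite T" "N \<notin> T" by (auto intro: finite_subset)
      then show "(\<Prod>m\<in>insert N T. x m) = x N * (\<Prod>m\<in>T. x m)" by simp
    qed
    also have "\<dots> = x N * esym N (k-1) x" by (simp add: esym_def sum_distrib_left)
    finally show ?thesis using False by simp
  qed
  finally show ?thesis .
qed

lemma KF_esym: "KF (1 + fps_X) N x $ k = esym N k x"
proof (induction N arbitrary: k)
  case 0 then show ?case by (simp add: KF_def esym_0)
next
  case (Suc N)
  have "KF (1 + fps_X) (Suc N) x = KF (1 + fps_X) N x * sc (x N) (1 + fps_X)"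
    unfolding KF_def by simp
  also have "\<dots> = KF (1 + fps_X) N x + fps_const (x N) * fps_X * KF (1 + fps_X) N x"
    by (simp only: sc_1X) (simp add: algebra_simps)
  finally have "KF (1 + fps_X) (Suc N) x = KF (1 + fps_X) N x + fps_const (x N) * fps_X * KF (1 + fps_X) N x" .
  then show ?case by (simp add: esym_Suc Suc.IH mult.assoc)
qed

lemma newton:
  "real (Suc n) * esym N (Suc n) x = (\<Sum>i=0..n. esym N i x * ((-1)^(n - i) * Pfun N (Suc (n-i)) x))"
proof -
  have inv: "inverse (1 + fps_X :: real fps) = Abs_fps (\<lambda>n. (-1)^n)"
    by (rule fps_inverse_fps_X_plus1') simp
  have "fps_deriv (1 + fps_X :: real fps) = (1 + fps_X) * inverse (1 + fps_X)"
    by (subst inverse_mult_eq_1') simp_all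
  from KF_rec[OF this, of n N x] show ?thesis by (simp add: KF_esym inv)
qed



lemma esym_zero[simp]: "esym N 0 x = 1"
proof -
  have "S = {}" if "S \<subseteq> {..<N}" "card S = 0" for S
  proof -
    have "finite S" using that(1) finite_subset by blast
    then show ?thesis using that(2) by simp
  qed
  then have "{S. S \<subseteq> {..<N} \<and> card S = 0} = {{}}" by auto
  then show ?thesis by (simp add: esym_def)
qed

lemma evp_cmult: "evp N w (\<lambda>\<mu>. a * f \<mu>) x = a * evp N w f x"
  by (simp add: evp_def sum_distrib_left mult_ac)

lemma evp_div: "evp N w (\<lambda>\<mu>. f \<mu> / a) x = evp N w f x / a"
  by (simp add: evp_def sum_divide_distrib)

lemma evp_diff: "evp N w (\<lambda>\<mu>. f \<mu> - g \<mu>) x = evp N w f x - evp N w g x"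
  by (simp add: evp_def left_diff_distrib sum_subtractf)

lemma evp_sum: "evp N w (\<lambda>\<mu>. \<Sum>i\<in>I. f i \<mu>) x = (\<Sum>i\<in>I. evp N w (f i) x)"
  by (simp add: evp_def sum_distrib_right sum.swap[of _ I])

lemma evp_delta: "0 < w \<Longrightarrow> evp N w (\<lambda>\<mu>. if \<mu> = {#w#} then 1 else 0) x = esym N w x"
proof -
  assume "0 < w"
  then have "{#w#} \<in> partitions w" by (simp add: partitions_def)
  have "evp N w (\<lambda>\<mu>. if \<mu> = {#w#} then 1 else 0) x = (\<Sum>\<mu>\<in>partitions w. if \<mu> = {#w#} then pe N \<mu> x else 0)"
    unfolding evp_def by (intro sum.cong) auto
  also have "\<dots> = pe N {#w#} x" using \<open>{#w#} \<in> partitions w\<close> by (simp add: finite_partitions)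
  also have "\<dots> = esym N w x" by (simp add: pe_def)
  finally show ?thesis .
qed

definition shiftm :: "nat \<Rightarrow> (nat multiset \<Rightarrow> real) \<Rightarrow> nat multiset \<Rightarrow> real" where
  "shiftm i Y \<mu> = (if i \<in># \<mu> then Y (\<mu> - {#i#}) else 0)"

lemma image_add_mset_partitions:
  assumes "0 < i"
  shows "add_mset i ` partitions w = partitions (i+w) \<inter> {\<mu>. i \<in># \<mu>}"
proof (intro equalityI subsetI)
  fix \<mu> assume "\<mu> \<in> partitions (i+w) \<inter> {\<mu>. i \<in># \<mu>}"
  then have m1: "\<mu> = add_mset i (\<mu> - {#i#})" "\<mu> \<in> partitions (i+w)"
    by (auto simp: insert_DiffM)
  have "\<mu> - {#i#} \<in> partitions w"
    unfolding partitions_def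
  proof (intro CollectI conjI ballI)
    show "0 < k" if "k \<in># \<mu> - {#i#}" for k
      using that m1(2) by (auto simp: partitions_def dest: in_diffD)
    have "sum_mset \<mu> = i + sum_mset (\<mu> - {#i#})"
      by (subst m1(1)) simp
    then show "sum_mset (\<mu> - {#i#}) = w" using m1(2) by (simp add: partitions_def)
  qed
  then show "\<mu> \<in> add_mset i ` partitions w" using m1(1) by (metis image_eqI)
qed (use assms in \<open>auto simp: partitions_def\<close>)

lemma hom_shiftm: assumes "0 < i" "hom w Y" shows "hom (i+w) (shiftm i Y)"
  unfolding hom_def
proof (intro allI impI)
  fix \<mu> assume m: "\<mu> \<notin> partitions (i+w)"
  show "shiftm i Y \<mu> = 0"
  proof (cases "i \<in># \<mu>")
    case True
    have "\<mu> - {#i#} \<notin> partitions w"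
    proof
      assume "\<mu> - {#i#} \<in> partitions w"
      then have "add_mset i (\<mu> - {#i#}) \<in> partitions (i+w)"
        using image_add_mset_partitions[OF assms(1), of w] by blast
      with True m show False by (simp add: insert_DiffM)
    qed
    then show ?thesis using assms(2) True by (simp add: shiftm_def hom_def)
  qed (simp add: shiftm_def)
qed

lemma evp_shiftm: assumes "0 < i" shows "evp N (i+w) (shiftm i Y) x = esym N i x * evp N w Y x"
proof -
  have "evp N (i+w) (shiftm i Y) x = (\<Sum>\<mu>\<in>partitions (i+w) \<inter> {\<mu>. i \<in># \<mu>}. shiftm i Y \<mu> * pe N \<mu> x)"
    unfolding evp_def by (intro sum.mono_neutral_right) (auto simp: finite_partitions shiftm_def)
  also have "\<dots> = (\<Sum>\<nu>\<in>partitions w. shiftm i Y (add_mset i \<nu>) * pe N (add_mset i \<nu>) x)"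
    unfolding image_add_mset_partitions[OF assms, symmetric]
    by (subst sum.reindex) (auto simp: inj_on_def)
  also have "\<dots> = esym N i x * evp N w Y x"
    by (simp add: evp_def shiftm_def pe_add_mset sum_distrib_left mult_ac)
  finally show ?thesis .
qed

fun pc :: "nat \<Rightarrow> nat multiset \<Rightarrow> real" where
  "pc 0 \<mu> = 0"
| "pc (Suc n) \<mu> = (-1)^n * (real (Suc n) * (if \<mu> = {#Suc n#} then 1 else 0)
      - (\<Sum>i\<in>{1..n}. (-1)^(n-i) * (if i \<in># \<mu> then pc (Suc n - i) (\<mu> - {#i#}) else 0)))"

lemma pc_Suc_fun: "pc (Suc n) = (\<lambda>\<mu>. (-1)^n * (real (Suc n) * (if \<mu> = {#Suc n#} then 1 else 0)
      - (\<Sum>i\<in>{1..n}. (-1)^(n-i) * shiftm i (pc (Suc n - i)) \<mu>)))"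
  by (rule ext) (simp add: shiftm_def)

lemma hom_sum: "(\<And>i. i \<in> I \<Longrightarrow> hom w (f i)) \<Longrightarrow> hom w (\<lambda>\<mu>. \<Sum>i\<in>I. f i \<mu>)"
  by (simp add: hom_def)

lemma hom_pc: "hom m (pc m)"
proof (induction m rule: less_induct)
  case (less m)
  show ?case
  proof (cases m)
    case 0 then show ?thesis by (simp add: hom_def)
  next
    case (Suc n)
    have h: "hom (Suc n) (shiftm i (pc (Suc n - i)))" if "i \<in> {1..n}" for i
      using hom_shiftm[of i "Suc n - i" "pc (Suc n - i)"] less[of "Suc n - i"] that Suc by auto
    have d: "hom (Suc n) (\<lambda>\<mu>. if \<mu> = {#Suc n#} then 1 else 0)"
      by (auto simp: hom_def partitions_def)
    show ?thesis unfolding Suc pc_Suc_fun using h d by (auto simp: hom_def)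
  qed
qed

lemma evp_pc: "0 < m \<Longrightarrow> evp N m (pc m) x = Pfun N m x"
proof (induction m rule: less_induct)
  case (less m)
  then obtain n where m: "m = Suc n" by (cases m) auto
  have IH: "evp N (Suc n) (shiftm i (pc (Suc n - i))) x = esym N i x * Pfun N (Suc n - i) x" if "i \<in> {1..n}" for i
    using evp_shiftm[of i N "Suc n - i" "pc (Suc n - i)" x] less.IH[of "Suc n - i"] that m by auto
  have "evp N m (pc m) x = (-1)^n * (real (Suc n) * esym N (Suc n) x
      - (\<Sum>i\<in>{1..n}. (-1)^(n-i) * (esym N i x * Pfun N (Suc n - i) x)))"
    unfolding m pc_Suc_fun evp_cmult evp_diff evp_sum evp_delta[OF zero_less_Suc]
    by (simp add: IH evp_cmult)
  also have "real (Suc n) * esym N (Suc n) x = (-1)^n * Pfun N (Suc n) x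
      + (\<Sum>i\<in>{1..n}. (-1)^(n-i) * (esym N i x * Pfun N (Suc n - i) x))"
  proof -
    have "{0..n} = insert 0 {1..n}" by auto
    then show ?thesis unfolding newton by (simp add: mult_ac Suc_diff_le)
  qed
  finally show ?case by (simp add: m algebra_simps flip: power_add)
qed

fun kc :: "real fps \<Rightarrow> nat \<Rightarrow> nat multiset \<Rightarrow> real" where
  "kc R 0 \<mu> = (if \<mu> = {#} then 1 else 0)"
| "kc R (Suc n) \<mu> = (\<Sum>i\<in>{0..n}. R $ (n - i) * mul (pc (Suc n - i)) (kc R i) \<mu>) / real (Suc n)"

lemma kc_Suc_fun: "kc R (Suc n) = (\<lambda>\<mu>. (\<Sum>i\<in>{0..n}. R $ (n - i) * mul (pc (Suc n - i)) (kc R i) \<mu>) / real (Suc n))"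
  by (rule ext) simp

lemma hom_kc: "hom m (kc R m)"
proof (induction m rule: less_induct)
  case (less m)
  show ?case
  proof (cases m)
    case 0 then show ?thesis by (simp add: hom_def partitions_0)
  next
    case (Suc n)
    have h: "hom (Suc n) (mul (pc (Suc n - i)) (kc R i))" if "i \<in> {0..n}" for i
    proof -
      have "hom (Suc n - i + i) (mul (pc (Suc n - i)) (kc R i))"
        by (rule hom_mul[OF hom_pc less]) (use that Suc in auto)
      then show ?thesis using that by simp
    qed
    show ?thesis unfolding Suc kc_Suc_fun using h by (auto simp: hom_def)
  qed
qed

lemma evp_kc:
  assumes "fps_deriv Q = Q * R" "Q $ 0 = 1"
  shows "evp N m (kc R m) x = KF Q N x $ m"
proof (induction m rule: less_induct)
  case (less m)
  show ?case
  proof (cases m)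
    case 0
    then show ?thesis by (simp add: evp_def partitions_0 pe_def KF_nth0[OF assms(2)])
  next
    case (Suc n)
    have e: "evp N (Suc n) (mul (pc (Suc n - i)) (kc R i)) x = Pfun N (Suc (n - i)) x * KF Q N x $ i"
      if "i \<in> {0..n}" for i
    proof -
      have "evp N (Suc n - i + i) (mul (pc (Suc n - i)) (kc R i)) x = evp N (Suc n - i) (pc (Suc n - i)) x * evp N i (kc R i) x"
        by (rule evp_mul[OF hom_pc hom_kc])
      moreover have "Suc n - i + i = Suc n" "Suc n - i = Suc (n - i)" using that by auto
      moreover have "evp N i (kc R i) x = KF Q N x $ i" using less[of i] that Suc by auto
      ultimately show ?thesis using evp_pc[of "Suc (n - i)" N x] by simp
    qed
    have "evp N m (kc R m) x = (\<Sum>i\<in>{0..n}. R $ (n - i) * (Pfun N (Suc (n - i)) x * KF Q N x $ i)) / real (Suc n)"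
      unfolding Suc kc_Suc_fun evp_div evp_sum evp_cmult by (simp add: e)
    also have "\<dots> = KF Q N x $ m"
      using KF_rec[OF assms(1), of n N x] by (simp add: Suc mult_ac field_simps)
    finally show ?thesis .
  qed
qed

lemma mseq_coeffs_kc:
  assumes "Q $ 0 = 1"
  shows "mseq_coeffs Q n = kc (fps_deriv Q * inverse Q) n"
proof -
  define R where "R = fps_deriv Q * inverse Q"
  have dQ: "fps_deriv Q = Q * R"
    unfolding R_def using inverse_mult_eq_1'[of Q] assms by (simp add: mult_ac)
  have ex: "expvecs n = ev' n n" by (simp add: expvecs_def ev'_def)
  have key: "(\<Sum>\<alpha>\<in>expvecs n. \<Prod>m<n. Q $ (\<alpha> m) * x m ^ \<alpha> m) = evp n n (kc R n) x" for x
    by (simp add: ex KF_nth[symmetric] evp_kc[OF dQ assms])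
  show ?thesis
    unfolding mseq_coeffs_def R_def[symmetric]
  proof (rule the_equality)
    show "(\<forall>\<mu>. \<mu> \<notin> partitions n \<longrightarrow> kc R n \<mu> = 0) \<and>
      (\<forall>x. (\<Sum>\<alpha>\<in>expvecs n. \<Prod>m<n. Q $ (\<alpha> m) * x m ^ \<alpha> m) =
           (\<Sum>\<mu>\<in>partitions n. kc R n \<mu> * prod_mset (image_mset (\<lambda>k. esym n k x) \<mu>)))"
      using hom_kc[of n R] key by (simp add: hom_def evp_def pe_def)
  next
    fix c assume c: "(\<forall>\<mu>. \<mu> \<notin> partitions n \<longrightarrow> c \<mu> = 0) \<and>
      (\<forall>x. (\<Sum>\<alpha>\<in>expvecs n. \<Prod>m<n. Q $ (\<alpha> m) * x m ^ \<alpha> m) =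
           (\<Sum>\<mu>\<in>partitions n. c \<mu> * prod_mset (image_mset (\<lambda>k. esym n k x) \<mu>)))"
    show "c = kc R n"
    proof (rule uniq)
      show "hom n c" using c by (simp add: hom_def)
      show "hom n (kc R n)" by (rule hom_kc)
      show "evp n n c x = evp n n (kc R n) x" for x
        using c key[of x] by (simp add: evp_def pe_def)
    qed
  qed
qed


declare kc.simps(2)[simp del] pc.simps(2)[simp del]

lemma submsets_single: "{\<alpha>. \<alpha> \<subseteq># {#k#}} = {{#}, {#k#}}"
  by (auto dest: nonempty_subseteq_mset_eq_single)

lemma submsets_pair: "{\<alpha>. \<alpha> \<subseteq># {#i, j#}} = {{#}, {#i#}, {#j#}, {#i, j#}}"
proof (intro equalityI subsetI)
  fix \<alpha> assume "\<alpha> \<in> {\<alpha>. \<alpha> \<subseteq># {#i, j#}}"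
  then have s: "\<alpha> \<subseteq># {#i, j#}" by simp
  then have "size \<alpha> \<le> 2" using size_mset_mono by fastforce
  then consider "size \<alpha> = 0" | "size \<alpha> = 1" | "size \<alpha> = 2" by linarith
  then show "\<alpha> \<in> {{#}, {#i#}, {#j#}, {#i, j#}}"
  proof cases
    case 1 then show ?thesis by simp
  next
    case 2
    then obtain a where a: "\<alpha> = {#a#}" using size_1_singleton_mset by blast
    then have "a \<in># {#i, j#}" using s by (auto dest: mset_subset_eqD)
    then show ?thesis using a by auto
  next
    case 3
    have "\<not> \<alpha> \<subset># {#i, j#}" using mset_subset_size 3 by fastforce
    then have "\<alpha> = {#i, j#}" using s by (simp add: subset_mset.le_less)
    then show ?thesis by simp
  qed
qed auto

lemma mul_single: "mul X Y {#k#} = X {#} * Y {#k#} + X {#k#} * Y {#}"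
  by (simp add: mul_def submsets_single)

lemma mul_pair: assumes "i \<noteq> j"
  shows "mul X Y {#i, j#} = X {#} * Y {#i, j#} + X {#i#} * Y {#j#} + X {#j#} * Y {#i#} + X {#i, j#} * Y {#}"
  using assms by (simp add: mul_def submsets_pair add_mset_commute)

lemma mul_pair_eq:
  shows "mul X Y {#i, i#} = X {#} * Y {#i, i#} + X {#i#} * Y {#i#} + X {#i, i#} * Y {#}"
  by (simp add: mul_def submsets_pair)

lemma hom_empty: "hom w c \<Longrightarrow> w \<noteq> 0 \<Longrightarrow> c {#} = 0"
  by (simp add: hom_def partitions_def)

lemma hom_single: "hom w c \<Longrightarrow> w \<noteq> k \<Longrightarrow> c {#k#} = 0"
  by (simp add: hom_def partitions_def)

lemma hom_pairz: "hom w c \<Longrightarrow> w \<noteq> i + j \<Longrightarrow> c {#i, j#} = 0"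
  by (simp add: hom_def partitions_def)

lemma pc_single: "pc (Suc n) {#Suc n#} = (-1)^n * real (Suc n)"
proof -
  have "(\<Sum>i\<in>{1..n}. (-1)^(n-i) * (if i \<in># {#Suc n#} then pc (Suc n - i) ({#Suc n#} - {#i#}) else 0)) = 0"
    by (intro sum.neutral) auto
  then show ?thesis by (simp add: pc.simps(2))
qed

lemma kc_single: "kc R (Suc n) {#Suc n#} = (-1)^n * R $ n"
proof -
  have "(\<Sum>i\<in>{0..n}. R $ (n - i) * mul (pc (Suc n - i)) (kc R i) {#Suc n#})
      = (\<Sum>i\<in>{0..n}. if i = 0 then R $ n * pc (Suc n) {#Suc n#} else 0)"
  proof (rule sum.cong[OF refl])
    fix i assume "i \<in> {0..n}"
    have "pc (Suc n - i) {#} = 0" using hom_empty[OF hom_pc] \<open>i \<in> {0..n}\<close> by auto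
    moreover have "i \<noteq> 0 \<Longrightarrow> kc R i {#} = 0" using hom_empty[OF hom_kc] by blast
    ultimately show "R $ (n - i) * mul (pc (Suc n - i)) (kc R i) {#Suc n#}
        = (if i = 0 then R $ n * pc (Suc n) {#Suc n#} else 0)"
      by (simp add: mul_single)
  qed
  then show ?thesis by (simp add: pc_single kc.simps(2))
qed

lemma sign_sq: "(-1::real)^a * (-1)^a = 1"
  by (simp add: power_mult_distrib[symmetric])

lemma pc_pair:
  "pc (Suc a + Suc b) {#Suc a, Suc b#} * (if a = b then 2 else 1) = (-1)^(a+b) * real (Suc a + Suc b)"
proof -
  define n where "n = Suc (a + b)"
  have nn: "Suc a + Suc b = Suc n" by (simp add: n_def)
  define f where "f i = (-1::real)^(n-i) * (if i \<in># {#Suc a, Suc b#} then pc (Suc n - i) ({#Suc a, Suc b#} - {#i#}) else 0)" for i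
  have sub: "{Suc a, Suc b} \<subseteq> {1..n}" by (auto simp: n_def)
  have S: "(\<Sum>i\<in>{1..n}. f i) = (\<Sum>i\<in>{Suc a, Suc b}. f i)"
    by (rule sum.mono_neutral_right) (auto simp: n_def f_def)
  have fa: "f (Suc a) = real (Suc b)"
  proof -
    have "n - Suc a = b" "Suc n - Suc a = Suc b" by (auto simp: n_def)
    then show ?thesis by (simp add: f_def pc_single sign_sq mult.assoc[symmetric])
  qed
  have fb: "f (Suc b) = real (Suc a)"
  proof -
    have "n - Suc b = a" "Suc n - Suc b = Suc a" by (auto simp: n_def)
    then show ?thesis by (simp add: f_def pc_single sign_sq mult.assoc[symmetric] add_mset_commute)
  qed
  have "pc (Suc n) {#Suc a, Suc b#} = (-1)^n * (0 - (\<Sum>i\<in>{1..n}. f i))"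
    by (simp add: f_def pc.simps(2))
  then show ?thesis
    unfolding nn S using fa fb by (cases "a = b") (auto simp: n_def algebra_simps)
qed

definition kap :: "real fps \<Rightarrow> nat \<Rightarrow> real" where "kap R k = kc R k {#k#}"

lemma kc_pair:
  "kc R (Suc a + Suc b) {#Suc a, Suc b#} * (if a = b then 2 else 1)
     = kap R (Suc a) * kap R (Suc b) - kap R (Suc a + Suc b)"
proof -
  define n where "n = Suc (a + b)"
  have nn: "Suc a + Suc b = Suc n" by (simp add: n_def)
  define g where "g i = R $ (n - i) * mul (pc (Suc n - i)) (kc R i) {#Suc a, Suc b#}" for i
  have z: "g i = 0" if "i \<in> {0..n}" "i \<notin> {0, Suc a, Suc b}" for i
  proof -
    have w: "Suc n - i \<noteq> 0" using that by auto
    have "pc (Suc n - i) {#} = 0" using hom_empty[OF hom_pc w] .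
    moreover have "kc R i {#} = 0" using hom_empty[OF hom_kc] that by auto
    moreover have "pc (Suc n - i) {#Suc a#} = 0" using hom_single[OF hom_pc] that by (auto simp: n_def)
    moreover have "pc (Suc n - i) {#Suc b#} = 0" using hom_single[OF hom_pc] that by (auto simp: n_def)
    ultimately show ?thesis unfolding g_def
      by (cases "a = b") (simp_all add: mul_pair mul_pair_eq)
  qed
  have sub: "{0, Suc a, Suc b} \<subseteq> {0..n}" by (auto simp: n_def)
  have S: "(\<Sum>i\<in>{0..n}. g i) = (\<Sum>i\<in>{0, Suc a, Suc b}. g i)"
    by (rule sum.mono_neutral_right) (use z sub in auto)
  have g0: "g 0 = R $ n * pc (Suc n) {#Suc a, Suc b#}"
    by (cases "a = b") (simp_all add: g_def mul_pair mul_pair_eq hom_empty[OF hom_pc])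
  have ga: "g (Suc a) = R $ b * pc (Suc b) {#Suc b#} * kap R (Suc a)"
  proof -
    have e: "n - Suc a = b" "Suc n - Suc a = Suc b" by (auto simp: n_def)
    have "kc R (Suc a) {#Suc b#} = 0" if "a \<noteq> b" by (rule hom_single[OF hom_kc]) (use that in simp)
    moreover have "pc (Suc b) {#Suc a#} = 0" if "a \<noteq> b" using hom_single[OF hom_pc] that by simp
    moreover have "kc R (Suc a) {#} = 0" by (rule hom_empty[OF hom_kc]) simp
    ultimately show ?thesis unfolding g_def e kap_def
      by (cases "a = b") (simp_all add: mul_pair mul_pair_eq hom_empty[OF hom_pc])
  qed
  have gb: "g (Suc b) = R $ a * pc (Suc a) {#Suc a#} * kap R (Suc b)"
  proof -
    have e: "n - Suc b = a" "Suc n - Suc b = Suc a" by (auto simp: n_def)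
    have "kc R (Suc b) {#Suc a#} = 0" if "a \<noteq> b" by (rule hom_single[OF hom_kc]) (use that in simp)
    moreover have "pc (Suc a) {#Suc b#} = 0" if "a \<noteq> b" using hom_single[OF hom_pc] that by simp
    moreover have "kc R (Suc b) {#} = 0" by (rule hom_empty[OF hom_kc]) simp
    ultimately show ?thesis unfolding g_def e kap_def
      by (cases "a = b") (simp_all add: mul_pair mul_pair_eq hom_empty[OF hom_pc])
  qed
  have kS: "kc R (Suc n) {#Suc a, Suc b#} = (\<Sum>i\<in>{0..n}. g i) / real (Suc n)"
    by (simp add: g_def kc.simps(2))
  have ka: "kap R (Suc a) = (-1)^a * R $ a" "kap R (Suc b) = (-1)^b * R $ b"
    "kap R (Suc n) = (-1)^n * R $ n"
    by (simp_all add: kap_def kc_single)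
  have pp: "pc (Suc n) {#Suc a, Suc b#} * (if a = b then 2 else 1) = (-1)^(a+b) * real (Suc n)"
    using pc_pair[of a b, unfolded nn] .
  have pcv: "pc (Suc n) {#Suc a, Suc b#} = (-1)^(a+b) * real (Suc n) / (if a = b then 2 else 1)"
    using pp by (cases "a = b") (simp_all add: field_simps)
  show ?thesis
  proof (cases "a = b")
    case True
    have "(\<Sum>i\<in>{0, Suc a, Suc b}. g i) = g 0 + g (Suc a)" using True by simp
    then have "kc R (Suc n) {#Suc a, Suc b#} * 2 * real (Suc n) = 2 * g 0 + 2 * g (Suc a)"
      using kS S by (simp add: field_simps)
    also have "\<dots> = real (Suc n) * (kap R (Suc a) * kap R (Suc b) - kap R (Suc n))"
      using True unfolding g0 ga pc_single ka pcv
      by (simp add: n_def algebra_simps power_add sign_sq)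
    finally show ?thesis unfolding nn using True by simp
  next
    case False
    have "(\<Sum>i\<in>{0, Suc a, Suc b}. g i) = g 0 + g (Suc a) + g (Suc b)" using False by simp
    then have "kc R (Suc n) {#Suc a, Suc b#} * real (Suc n) = g 0 + g (Suc a) + g (Suc b)"
      using kS S by (simp add: field_simps)
    also have "\<dots> = real (Suc n) * (kap R (Suc a) * kap R (Suc b) - kap R (Suc n))"
      using False unfolding g0 ga gb pc_single ka pcv
      by (simp add: n_def algebra_simps power_add sign_sq)
    finally show ?thesis unfolding nn using False by simp
  qed
qed



definition Cs :: "real fps" where "Cs = Abs_fps (\<lambda>k. 1 / fact (2*k))"
definition Ss :: "real fps" where "Ss = Abs_fps (\<lambda>k. 1 / fact (2*k+1))"

lemma Cs0[simp]: "Cs $ 0 = 1" by (simp add: Cs_def)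
lemma Ss0[simp]: "Ss $ 0 = 1" by (simp add: Ss_def)

lemma two_nth[simp]: "((2::real fps) * f) $ n = 2 * f $ n"
  by (simp add: numeral_fps_const)

lemma two_nth'[simp]: "(f * (2::real fps)) $ n = f $ n * 2"
  by (simp add: numeral_fps_const)

lemma F1: "2 * fps_deriv Cs = Ss"
proof (rule fps_ext)
  fix n
  have f: "fact (2*(n+1)) = (2 * real n + 2) * (fact (2*n+1) :: real)"
  proof -
    have "2*(n+1) = Suc (2*n+1)" by simp
    then show ?thesis by (simp only: fact_Suc) simp
  qed
  have gen: "2 * (real (n+1) / ((2 * real n + 2) * x)) = 1 / x" if x: "x > 0" for x :: real
  proof -
    have p: "x * 2 + x * (real n * 2) > 0" using x by (intro add_pos_nonneg) auto
    then have p': "x * 2 + x * (real n * 2) \<noteq> 0" by linarith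
    show ?thesis using x p' by (simp add: field_simps)
  qed
  have "(2 * fps_deriv Cs) $ n = 2 * (real (n+1) / fact (2*(n+1)))"
    by (simp add: two_nth Cs_def)
  also have "\<dots> = 1 / fact (2*n+1)" unfolding f by (rule gen) simp
  finally show "(2 * fps_deriv Cs) $ n = Ss $ n" by (simp add: Ss_def)
qed

lemma F2: "Ss + 2 * fps_X * fps_deriv Ss = Cs"
proof (rule fps_ext)
  fix n
  show "(Ss + 2 * fps_X * fps_deriv Ss) $ n = Cs $ n"
  proof (cases n)
    case 0 then show ?thesis by (simp add: numeral_fps_const mult.assoc)
  next
    case (Suc m)
    have f: "fact (2*(m+1)+1) = (2 * real m + 3) * (fact (2*(m+1)) :: real)"
    proof -
      have "2*(m+1)+1 = Suc (2*(m+1))" by simp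
      then show ?thesis by (simp only: fact_Suc) simp
    qed
    have gen: "1 / ((2 * real m + 3) * x) + 2 * (real (m+1) / ((2 * real m + 3) * x)) = 1 / x" if x: "x > 0" for x :: real
    proof -
      have p: "x * 3 + x * (real m * 2) > 0" using x by (intro add_pos_nonneg) auto
      then have p': "x * 3 + x * (real m * 2) \<noteq> 0" by linarith
      show ?thesis using x p' by (simp add: field_simps)
    qed
    have "(Ss + 2 * fps_X * fps_deriv Ss) $ n = 1 / fact (2*(m+1)+1) + 2 * (real (m+1) / fact (2*(m+1)+1))"
      by (simp add: numeral_fps_const Ss_def Suc mult.assoc)
    also have "\<dots> = 1 / fact (2*(m+1))" unfolding f by (rule gen) simp
    finally show ?thesis by (simp add: Cs_def Suc)
  qed
qed

definition E :: "real fps" where "E = fps_deriv Cs"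
definition D :: "real fps" where "D = fps_deriv Ss"
lemma hS: "Ss = 2 * E" by (simp add: E_def F1)
lemma hC: "Cs = 2 * E + 2 * fps_X * D" by (simp add: D_def F2[symmetric] hS[symmetric])

lemma F3: "Cs * Cs - fps_X * Ss * Ss = 1"
proof -
  have "fps_deriv (Cs * Cs - fps_X * Ss * Ss) = 0"
    by (simp add: E_def[symmetric] D_def[symmetric]) (simp add: hS hC algebra_simps)
  then have "Cs * Cs - fps_X * Ss * Ss = fps_const ((Cs * Cs - fps_X * Ss * Ss) $ 0)"
    by (simp only: fps_deriv_eq_0_iff)
  then show ?thesis by simp
qed

lemma sysB: assumes "B + 2 * fps_X * fps_deriv B = (A :: real fps)"
  shows "B $ k = A $ k / (2 * real k + 1)"
proof -
  have 1: "(B + 2 * fps_X * fps_deriv B) $ k = (2 * real k + 1) * B $ k"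
    by (cases k) (simp_all add: two_nth mult.assoc algebra_simps)
  have 2: "(B + 2 * fps_X * fps_deriv B) $ k = A $ k" by (simp only: assms)
  have 3: "A $ k = (2 * real k + 1) * B $ k" using 1 2 by argo
  have "2 * real k + 1 \<noteq> 0" by (simp add: add_pos_nonneg[THEN less_imp_neq, symmetric])
  then show ?thesis using 3 by (simp add: field_simps)
qed

lemma sysA: assumes "fps_deriv A = 2 * (B :: real fps)"
  shows "A $ Suc k = 2 * B $ k / (real k + 1)"
proof -
  have "fps_deriv A $ k = (real k + 1) * A $ Suc k" by simp
  then show ?thesis using assms by (simp add: two_nth field_simps)
qed

lemma sys_uniq:
  fixes A1 A2 B1 B2 :: "real fps"
  assumes "fps_deriv A1 = 2 * B1" "B1 + 2 * fps_X * fps_deriv B1 = A1"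
    "fps_deriv A2 = 2 * B2" "B2 + 2 * fps_X * fps_deriv B2 = A2" "A1 $ 0 = A2 $ 0"
  shows "A1 = A2"
proof -
  have "A1 $ k = A2 $ k" for k
  proof (induction k)
    case 0 then show ?case using assms(5) .
  next
    case (Suc k)
    then show ?case using sysA[OF assms(1)] sysA[OF assms(3)] sysB[OF assms(2)] sysB[OF assms(4)] by simp
  qed
  then show ?thesis by (rule fps_ext)
qed

lemma sys_uniqB:
  fixes A B1 B2 :: "real fps"
  assumes "B1 + 2 * fps_X * fps_deriv B1 = A" "B2 + 2 * fps_X * fps_deriv B2 = A"
  shows "B1 = B2"
  by (rule fps_ext) (simp add: sysB[OF assms(1)] sysB[OF assms(2)])

lemma sc_two: "sc c (2 * f) = 2 * sc c f"
  by (simp add: numeral_fps_const sc_cmult)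

lemma sc4_aux1: "fps_deriv (sc 4 Cs) = 2 * sc 4 Ss"
proof -
  have "fps_deriv (sc 4 Cs) = fps_const 4 * sc 4 E" by (simp add: sc_deriv E_def)
  also have "fps_const (4::real) = 2 * 2" by (simp add: numeral_fps_const)
  finally show ?thesis by (simp add: hS sc_two)
qed

lemma sc4_aux2: "sc 4 Ss + 2 * fps_X * fps_deriv (sc 4 Ss) = sc 4 Cs"
proof -
  have "sc 4 Cs = sc 4 Ss + 2 * (fps_const 4 * fps_X * sc 4 D)"
    by (subst F2[symmetric]) (simp add: sc_add sc_two sc_X mult.assoc D_def)
  then show ?thesis by (simp add: sc_deriv D_def algebra_simps)
qed

lemma sc4_C: "sc 4 Cs = Cs * Cs + fps_X * Ss * Ss"
proof (rule sys_uniq)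
  show "fps_deriv (sc 4 Cs) = 2 * sc 4 Ss" by (rule sc4_aux1)
  show "sc 4 Ss + 2 * fps_X * fps_deriv (sc 4 Ss) = sc 4 Cs" by (rule sc4_aux2)
  show "fps_deriv (Cs * Cs + fps_X * Ss * Ss) = 2 * (Ss * Cs)"
    by (simp add: E_def[symmetric] D_def[symmetric]) (simp add: hS hC algebra_simps)
  show "Ss * Cs + 2 * fps_X * fps_deriv (Ss * Cs) = Cs * Cs + fps_X * Ss * Ss"
    by (simp add: E_def[symmetric] D_def[symmetric]) (simp add: hS hC algebra_simps)
qed simp

lemma sc4_S: "sc 4 Ss = Ss * Cs"
proof (rule sys_uniqB)
  show "sc 4 Ss + 2 * fps_X * fps_deriv (sc 4 Ss) = Cs * Cs + fps_X * Ss * Ss"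
    using sc4_aux2 sc4_C by simp
  show "Ss * Cs + 2 * fps_X * fps_deriv (Ss * Cs) = Cs * Cs + fps_X * Ss * Ss"
    by (simp add: E_def[symmetric] D_def[symmetric]) (simp add: hS hC algebra_simps)
qed



definition V :: "real fps" where "V = Cs * inverse Ss"

lemma Ss_ne: "Ss \<noteq> 0" using Ss0 by (metis fps_zero_nth zero_neq_one)
lemma Cs_ne: "Cs \<noteq> 0" using Cs0 by (metis fps_zero_nth zero_neq_one)
lemma V0[simp]: "V $ 0 = 1" by (simp add: V_def)
lemma V_ne: "V \<noteq> 0" using V0 by (metis fps_zero_nth zero_neq_one)
lemma hV: "V * Ss = Cs"
  by (simp add: V_def mult.assoc inverse_mult_eq_1)

lemma ODE: "2 * fps_X * fps_deriv V = V + fps_X - V * V"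
proof -
  have hd: "fps_deriv V * Ss + V * D = E"
    using arg_cong[OF hV, of fps_deriv] by (simp add: D_def E_def add.commute)
  have hC': "Cs = Ss + 2 * fps_X * D" by (simp add: D_def F2)
  have hd': "fps_deriv V * Ss = E - V * D" using hd by (simp add: eq_diff_eq)
  have l0: "2 * fps_X * (fps_deriv V * Ss) = 2 * fps_X * E - 2 * fps_X * V * D"
    by (simp only: hd') (simp add: algebra_simps)
  have "(2 * fps_X * fps_deriv V) * Ss = 2 * fps_X * (fps_deriv V * Ss)" by (simp only: mult.assoc)
  also note l0
  finally have l: "(2 * fps_X * fps_deriv V) * Ss = 2 * fps_X * E - 2 * fps_X * V * D" .
  have "(V + fps_X - V * V) * Ss = V * Ss + fps_X * Ss - V * (V * Ss)" by (simp add: algebra_simps)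
  also have "\<dots> = Cs + fps_X * Ss - V * Cs" by (simp only: hV)
  also have "\<dots> = Cs + fps_X * Ss - V * Ss - 2 * fps_X * V * D"
    by (subst (2) hC') (simp add: algebra_simps)
  also have "\<dots> = fps_X * Ss - 2 * fps_X * V * D" by (simp only: hV) (simp add: algebra_simps)
  also have "\<dots> = 2 * fps_X * E - 2 * fps_X * V * D" by (simp add: hS algebra_simps)
  finally have r: "(V + fps_X - V * V) * Ss = 2 * fps_X * E - 2 * fps_X * V * D" .
  from l r have "(2 * fps_X * fps_deriv V) * Ss = (V + fps_X - V * V) * Ss" by simp
  then show ?thesis using Ss_ne by simp
qed

definition u :: "nat \<Rightarrow> real" where "u k = V $ k"

lemma u0[simp]: "u 0 = 1" by (simp add: u_def)

lemma u_rec: "(2 * real m + 3) * u (Suc m) = (if m = 0 then 1 else 0) - (\<Sum>i=1..m. u i * u (Suc m - i))"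
proof -
  have q: "(2 * fps_X * fps_deriv V) $ Suc m = (V + fps_X - V * V) $ Suc m" by (simp only: ODE)
  have l: "(2 * fps_X * fps_deriv V) $ Suc m = 2 * (real (Suc m) * u (Suc m))"
    by (simp add: mult.assoc u_def del: of_nat_Suc)
  have r: "(V + fps_X - V * V) $ Suc m = u (Suc m) + (if m = 0 then 1 else 0) - (\<Sum>i=0..Suc m. u i * u (Suc m - i))"
    by (simp add: fps_mult_nth u_def fps_X_nth)
  have e: "2 * (real (Suc m) * u (Suc m)) = u (Suc m) + (if m = 0 then 1 else 0) - (\<Sum>i=0..Suc m. u i * u (Suc m - i))"
    using q l r by simp
  have "(\<Sum>i=0..Suc m. u i * u (Suc m - i)) = u 0 * u (Suc m) + (\<Sum>i=1..m. u i * u (Suc m - i)) + u (Suc m) * u 0"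
  proof -
    have "(\<Sum>i=0..Suc m. u i * u (Suc m - i)) = (\<Sum>i=0..m. u i * u (Suc m - i)) + u (Suc m) * u 0"
      by (simp add: sum.atLeast0_atMost_Suc)
    also have "(\<Sum>i=0..m. u i * u (Suc m - i)) = u 0 * u (Suc m) + (\<Sum>i=Suc 0..m. u i * u (Suc m - i))"
      by (simp add: sum.atLeast_Suc_atMost)
    finally show ?thesis by simp
  qed
  with e show ?thesis by (simp add: algebra_simps)
qed

lemma u_sign: "(-1)^m * u (Suc m) > 0"
proof (induction m rule: less_induct)
  case (less m)
  have t: "(-1)^m * (- (u i * u (Suc m - i))) = ((-1)^(i-1) * u i) * ((-1)^(m-i) * u (Suc (m-i)))"
    if i: "i \<in> {1..m}" for i
  proof -
    obtain a where a: "i = Suc a" using i by (cases i) auto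
    have "m = Suc (a + (m - i))" using i a by auto
    then have "(-1::real)^m = - ((-1)^a * (-1)^(m-i))" by (metis power_add power_Suc mult_minus1)
    moreover have "Suc m - i = Suc (m - i)" using i by auto
    ultimately show ?thesis using a by (simp add: algebra_simps)
  qed
  have pos: "((-1)^(i-1) * u i) * ((-1)^(m-i) * u (Suc (m-i))) > 0" if i: "i \<in> {1..m}" for i
  proof -
    obtain a where a: "i = Suc a" using i by (cases i) auto
    have "(-1)^a * u (Suc a) > 0" using less[of a] i a by auto
    moreover have "(-1)^(m-i) * u (Suc (m-i)) > 0" using less[of "m-i"] i by auto
    ultimately show ?thesis using a by simp
  qed
  have "(-1)^m * ((2 * real m + 3) * u (Suc m)) = (-1)^m * (if m = 0 then 1 else 0) + (\<Sum>i=1..m. (-1)^m * (- (u i * u (Suc m - i))))"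
    by (subst u_rec) (simp add: algebra_simps sum_distrib_left sum_negf)
  also have "\<dots> = (if m = 0 then 1 else 0) + (\<Sum>i=1..m. ((-1)^(i-1) * u i) * ((-1)^(m-i) * u (Suc (m-i))))"
    using t by simp
  also have "\<dots> > 0"
  proof (cases "m = 0")
    case True then show ?thesis by simp
  next
    case False
    then have "{1..m} \<noteq> {}" by auto
    then have "(\<Sum>i=1..m. ((-1)^(i-1) * u i) * ((-1)^(m-i) * u (Suc (m-i)))) > 0"
      using pos by (intro sum_pos) auto
    then show ?thesis using False by simp
  qed
  finally have "(2 * real m + 3) * ((-1)^m * u (Suc m)) > 0" by (simp add: algebra_simps)
  moreover have "2 * real m + 3 > 0" by simp
  ultimately show ?case by (simp add: zero_less_mult_iff)
qed

definition RL :: "real fps" where "RL = fps_deriv V * inverse V"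

lemma X_invV: "fps_X * inverse V = sc 4 V - V"
proof -
  define W where "W = sc 4 V"
  have hW: "W * (Ss * Cs) = Cs * Cs + fps_X * Ss * Ss"
    using arg_cong[OF hV, of "sc 4"] by (simp add: W_def sc_mult sc4_S sc4_C)
  have "((W - V) * V) * (Ss * Ss * Cs) = (W * (Ss * Cs)) * (V * Ss) - (V * Ss) * (V * Ss) * Cs"
    by (simp add: algebra_simps)
  also have "\<dots> = (Cs * Cs + fps_X * Ss * Ss) * Cs - Cs * Cs * Cs" by (simp only: hW hV)
  also have "\<dots> = fps_X * (Ss * Ss * Cs)" by (simp add: algebra_simps)
  finally have "(W - V) * V = fps_X" using Ss_ne Cs_ne by simp
  then have "fps_X * inverse V = (W - V) * (V * inverse V)" by (simp add: mult.assoc)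
  then show ?thesis by (simp add: inverse_mult_eq_1' W_def)
qed

lemma RL_eq: "2 * fps_X * RL = 1 + sc 4 V - 2 * V"
proof -
  have "2 * fps_X * RL = (2 * fps_X * fps_deriv V) * inverse V" by (simp add: RL_def mult_ac)
  also have "\<dots> = (V + fps_X - V * V) * inverse V" by (simp only: ODE)
  also have "\<dots> = V * inverse V + fps_X * inverse V - V * (V * inverse V)" by (simp add: algebra_simps)
  also have "\<dots> = 1 + sc 4 V - 2 * V" by (simp add: inverse_mult_eq_1' X_invV)
  finally show ?thesis .
qed

lemma RL_nth: "RL $ m = (4^(Suc m) - 2) * u (Suc m) / 2"
proof -
  have "(2 * fps_X * RL) $ Suc m = (1 + sc 4 V - 2 * V) $ Suc m" by (simp only: RL_eq)
  then show ?thesis by (simp add: mult.assoc u_def field_simps)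
qed

definition T :: "real fps" where "T = sc (1/4) Ss"
definition RA :: "real fps" where "RA = fps_deriv (inverse T) * inverse (inverse T)"

lemma T0[simp]: "T $ 0 = 1" by (simp add: T_def)

lemma RA_eq: "2 * fps_X * RA = 1 - sc (1/4) V"
proof -
  have RA: "RA = - fps_deriv T * inverse T"
  proof -
    have "RA = - fps_deriv T * (inverse T)\<^sup>2 * T" by (simp add: RA_def fps_inverse_deriv)
    also have "\<dots> = - fps_deriv T * (inverse T * T) * inverse T" by (simp add: power2_eq_square mult_ac)
    finally show ?thesis by (simp add: inverse_mult_eq_1)
  qed
  have XT: "2 * fps_X * fps_deriv T = sc (1/4) (Cs - Ss)"
  proof -
    have "sc (1/4) (Cs - Ss) = sc (1/4) (2 * fps_X * D)" by (simp add: D_def F2[symmetric])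
    also have "\<dots> = 2 * (fps_const (1/4) * fps_X * sc (1/4) D)" by (simp add: sc_two sc_X mult.assoc)
    also have "\<dots> = 2 * fps_X * fps_deriv T" by (simp add: T_def sc_deriv D_def mult_ac)
    finally show ?thesis by simp
  qed
  have "2 * fps_X * RA = - (2 * fps_X * fps_deriv T) * inverse T" by (simp add: RA mult_ac)
  also have "\<dots> = - (sc (1/4) (Cs - Ss)) * inverse T" by (simp only: XT)
  also have "\<dots> = - (sc (1/4) Cs - T) * inverse T" by (simp add: sc_diff T_def)
  also have "\<dots> = T * inverse T - sc (1/4) Cs * inverse T" by (simp add: algebra_simps)
  also have "\<dots> = 1 - sc (1/4) V"
    by (simp add: inverse_mult_eq_1' V_def sc_mult sc_inverse T_def)
  finally show ?thesis .
qed

lemma RA_nth: "RA $ m = - ((1/4)^(Suc m) * u (Suc m)) / 2"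
proof -
  have "(2 * fps_X * RA) $ Suc m = (1 - sc (1/4) V) $ Suc m" by (simp only: RA_eq)
  then show ?thesis by (simp add: mult.assoc u_def field_simps)
qed



lemma L_eq: "L_series = V" by (simp add: L_series_def V_def Cs_def Ss_def)

lemma A_eq: "A_series = inverse T"
proof -
  have "Abs_fps (\<lambda>k. 1 / (4 ^ k * fact (2*k+1))) = T"
    by (rule fps_ext) (simp add: T_def Ss_def power_one_over)
  then show ?thesis by (simp add: A_series_def)
qed

lemma s_kc: "s_coeff \<mu> = kc RL (sum_mset \<mu>) \<mu>"
  unfolding s_coeff_def mseq_coeff_def L_eq RL_def by (simp add: mseq_coeffs_kc)

lemma a_kc: "a_coeff \<mu> = kc RA (sum_mset \<mu>) \<mu>"
  unfolding a_coeff_def mseq_coeff_def A_eq RA_def by (simp add: mseq_coeffs_kc)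

definition v :: "nat \<Rightarrow> real" where "v m = (-1)^m * u (Suc m)"

lemma v_pos: "v m > 0" using u_sign by (simp add: v_def)

lemma sL: "kap RL (Suc m) = (4^(Suc m) - 2) * v m / 2"
  by (simp add: kap_def kc_single RL_nth v_def)

lemma aA: "kap RA (Suc m) = - (v m / 4^(Suc m)) / 2"
  by (simp add: kap_def kc_single RA_nth v_def power_one_over)

lemma final_alg:
  fixes p q r x y :: real
  assumes "p > 0" "q > 0" "r > 0" "x > 1" "y > 1"
  shows "((x-2)*p/2) * ((y-2)*q/2) * (-(r/(x*y))/2) - ((x*y-2)*r/2) * (-(p/x)/2) * (-(q/y)/2) \<noteq> 0"
proof -
  have x0: "x \<noteq> 0" "y \<noteq> 0" using assms by auto
  have eq: "((x-2)*p/2) * ((y-2)*q/2) * (-(r/(x*y))/2) - ((x*y-2)*r/2) * (-(p/x)/2) * (-(q/y)/2)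
      = -((p*q*r*((x-1)*(y-1))) / (4*x*y))"
    using x0 by (simp add: field_simps)
  have "p*q*r*((x-1)*(y-1)) > 0" using assms by simp
  moreover have "4*x*y > 0" using assms by simp
  ultimately have "(p*q*r*((x-1)*(y-1))) / (4*x*y) > 0" by (rule divide_pos_pos)
  then show ?thesis unfolding eq using assms by auto
qed

theorem mainTheorem9:
  fixes i j :: nat
  assumes "0 < i" and "0 < j"
  defines "lam \<equiv> (if i = j then 2 else 1 :: real)"
  shows "s_coeff {#i#} * s_coeff {#j#} = s_coeff {#i+j#} + lam * s_coeff {#i, j#}
     \<and> a_coeff {#i#} * a_coeff {#j#} = a_coeff {#i+j#} + lam * a_coeff {#i, j#}
     \<and> s_coeff {#i, j#} * a_coeff {#i+j#} - s_coeff {#i+j#} * a_coeff {#i, j#} \<noteq> 0"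
proof -
  obtain a where a: "i = Suc a" using assms(1) by (cases i) auto
  obtain b where b: "j = Suc b" using assms(2) by (cases j) auto
  have lam: "lam = (if a = b then 2 else 1)" by (simp add: lam_def a b)
  have sk: "s_coeff {#k#} = kap RL k" for k by (simp add: s_kc kap_def)
  have ak: "a_coeff {#k#} = kap RA k" for k by (simp add: a_kc kap_def)
  have sp: "s_coeff {#i, j#} = kc RL (Suc a + Suc b) {#Suc a, Suc b#}" by (simp add: s_kc a b)
  have ap: "a_coeff {#i, j#} = kc RA (Suc a + Suc b) {#Suc a, Suc b#}" by (simp add: a_kc a b)
  have KL: "lam * s_coeff {#i, j#} = kap RL (Suc a) * kap RL (Suc b) - kap RL (Suc a + Suc b)"
    using kc_pair[of RL a b] by (simp add: sp lam mult.commute)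
  have KA: "lam * a_coeff {#i, j#} = kap RA (Suc a) * kap RA (Suc b) - kap RA (Suc a + Suc b)"
    using kc_pair[of RA a b] by (simp add: ap lam mult.commute)
  have p1: "s_coeff {#i#} * s_coeff {#j#} = s_coeff {#i+j#} + lam * s_coeff {#i, j#}"
    using KL by (simp add: sk a b)
  have p2: "a_coeff {#i#} * a_coeff {#j#} = a_coeff {#i+j#} + lam * a_coeff {#i, j#}"
    using KA by (simp add: ak a b)
  have lam0: "lam \<noteq> 0" by (simp add: lam_def)
  define n where "n = Suc (a + b)"
  have nn: "Suc a + Suc b = Suc n" by (simp add: n_def)
  have "lam * (s_coeff {#i, j#} * a_coeff {#i+j#} - s_coeff {#i+j#} * a_coeff {#i, j#})
      = (lam * s_coeff {#i, j#}) * a_coeff {#i+j#} - s_coeff {#i+j#} * (lam * a_coeff {#i, j#})"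
    by (simp add: algebra_simps)
  also have "\<dots> = kap RL (Suc a) * kap RL (Suc b) * kap RA (Suc n) - kap RL (Suc n) * (kap RA (Suc a) * kap RA (Suc b))"
    unfolding KL KA by (simp add: sk ak a b n_def algebra_simps)
  also have "\<dots> = ((4^(Suc a) - 2) * v a / 2) * ((4^(Suc b) - 2) * v b / 2) * (- (v n / (4^(Suc a) * 4^(Suc b))) / 2)
      - ((4^(Suc a) * 4^(Suc b) - 2) * v n / 2) * (- (v a / 4^(Suc a)) / 2) * (- (v b / 4^(Suc b)) / 2)"
  proof -
    have "(4::real)^(Suc n) = 4^(Suc a) * 4^(Suc b)" by (simp add: power_add[symmetric] nn[symmetric])
    then show ?thesis by (simp only: sL aA)
  qed
  also have "\<dots> \<noteq> 0"
    by (rule final_alg) (simp_all add: v_pos one_less_power del: power_Suc)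
  finally have "lam * (s_coeff {#i, j#} * a_coeff {#i+j#} - s_coeff {#i+j#} * a_coeff {#i, j#}) \<noteq> 0" .
  then have p3: "s_coeff {#i, j#} * a_coeff {#i+j#} - s_coeff {#i+j#} * a_coeff {#i, j#} \<noteq> 0" by simp
  show ?thesis using p1 p2 p3 by blast
qed


end
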